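(* Let $\mathcal{F}$ be an RKHS on $\mathcal{X}$ with kernel $k$ and feature map $\phi(x)=k(x,\cdot)$, and $\mathcal{U}$ an RKHS on $\mathcal{W}=\mathcal{Y}\times\mathcal{Z}$ with kernel $l$ and feature map $\varphi(w)=l(w,\cdot)$. Given an i.i.d. sample $(x_i,y_i,z_i)_{i=1}^n$ from $\mathbb{P}(X,Y,Z)$, set $w_i=(y_i,z_i)$, $\mathbf{y}=(y_1,\dots,y_n)^\top$, $\widehat{\mathcal{C}}_{XW}=\frac1n\sum_i\phi(x_i)\otimes\varphi(w_i)$, $\widehat{\mathcal{C}}_{WX}$ its adjoint, $\widehat{\mathcal{C}}_W=\frac1n\sum_i\varphi(w_i)\otimes\varphi(w_i)$, $\hat{\mathbf{b}}=\frac1n\sum_i y_i\varphi(w_i)$, and for $\lambda_1,\lambda_2>0$ let $$\hat f:=\big(\widehat{\mathcal{C}}_{XW}(\widehat{\mathcal{C}}_W+\lambda_1\mathcal{I})^{-1}\widehat{\mathcal{C}}_{WX}+\lambda_2\mathcal{I}\big)^{-1}\widehat{\mathcal{C}}_{XW}(\widehat{\mathcal{C}}_W+\lambda_1\mathcal{I})^{-1}\hat{\mathbf{b}}.$$ Let $\mathbf{K}_{ij}=k(x_i,x_j)$ and $\mathbf{L}_{ij}=l(w_i,w_j)$ be the Gram matrices and $\mathbf{M}:=\mathbf{K}(\mathbf{L}+n\lambda_1 I)^{-1}\mathbf{L}$, and assume $\mathbf{M}\mathbf{K}+n\lambda_2\mathbf{K}$ is invertible. Then $\hat f=\sum_{i=1}^n\beta_i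 k(x_i,\cdot)$ with $\boldsymbol\beta=(\mathbf{M}\mathbf{K}+n\lambda_2\mathbf{K})^{-1}\mathbf{M}\mathbf{y}$.
   Context: $\mathcal{I}$ denotes the identity operator; $(a\otimes b)u=\langle b,u\rangle a$. *)

theory Defs
  imports "HOL-Analysis.Analysis"
begin

definition tensor_op :: "'a::real_vector \<Rightarrow> 'b::real_inner \<Rightarrow> 'b \<Rightarrow> 'a" where
  "tensor_op a b = (\<lambda>u. inner b u *\<^sub>R a)"

definition emp_cov :: "('n::finite \<Rightarrow> 'a::real_vector) \<Rightarrow> ('n \<Rightarrow> 'b::real_inner) \<Rightarrow> 'b \<Rightarrow> 'a" where
  "emp_cov p q = (\<lambda>u. (1 / real CARD('n)) *\<^sub>R (\<Sum>i\<in>UNIV. tensor_op (p i) (q i) u))"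

definition gram :: "('a \<Rightarrow> 'a \<Rightarrow> real) \<Rightarrow> ('n::finite \<Rightarrow> 'a) \<Rightarrow> real^'n^'n" where
  "gram kern s = (\<chi> i j. kern (s i) (s j))"

end

theory Submission
  imports Defs
begin


lemma minv: assumes "invertible (A::real^'n::finite^'n)"
  shows "A ** matrix_inv A = mat 1" "matrix_inv A ** A = mat 1"
  using someI_ex[OF assms[unfolded invertible_def]] unfolding matrix_inv_def by auto

lemma inner_sum_gram:
  fixes p :: "'n::finite \<Rightarrow> 'a::real_inner"
  shows "inner (p i) (\<Sum>j\<in>UNIV. c$j *\<^sub>R p j) = ((\<chi> i j. inner (p i) (p j)) *v c) $ i"
  by (simp add: inner_sum_right matrix_vector_mult_def mult.commute)

lemma gram_quad:
  fixes p :: "'n::finite \<Rightarrow> 'a::real_inner"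
  shows "c \<bullet> ((\<chi> i j. inner (p i) (p j)) *v c) = inner (\<Sum>i\<in>UNIV. c$i *\<^sub>R p i) (\<Sum>i\<in>UNIV. c$i *\<^sub>R p i)"
  apply (simp add: inner_vec_def inner_sum_left inner_sum_right matrix_vector_mult_def sum_distrib_left mult_ac)
  apply (intro sum.cong refl)
  apply (simp add: inner_commute)
  done

lemma gram_kernel:
  fixes p :: "'n::finite \<Rightarrow> 'a::real_inner"
  assumes "(\<chi> i j. inner (p i) (p j)) *v d = 0"
  shows "(\<Sum>i\<in>UNIV. d$i *\<^sub>R p i) = 0"
  using gram_quad[of d p] assms by simp

lemma gram_psd:
  fixes p :: "'n::finite \<Rightarrow> 'a::real_inner"
  shows "c \<bullet> ((\<chi> i j. inner (p i) (p j)) *v c) \<ge> 0"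
  using gram_quad[of c p] by simp

lemma emp_cov_eq:
  fixes p :: "'n::finite \<Rightarrow> 'a::real_vector" and q :: "'n \<Rightarrow> 'b::real_inner"
  shows "emp_cov p q u = (\<Sum>i\<in>UNIV. ((1 / real CARD('n)) * inner (q i) u) *\<^sub>R p i)"
  unfolding emp_cov_def tensor_op_def by (simp add: scaleR_sum_right)

lemma gram_inv:
  fixes p :: "'n::finite \<Rightarrow> 'a::real_inner"
  assumes "t > 0"
  shows "invertible ((\<chi> i j. inner (p i) (p j)) + t *\<^sub>R mat 1)"
proof -
  let ?L = "(\<chi> i j. inner (p i) (p j)) :: real^'n^'n"
  have "inj ((*v) (?L + t *\<^sub>R mat 1))"
  proof (rule linear_injective_0[THEN iffD2])
    show "linear ((*v) (?L + t *\<^sub>R mat 1))" by simp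
    show "\<forall>c. (?L + t *\<^sub>R mat 1) *v c = 0 \<longrightarrow> c = 0"
    proof safe
      fix c assume "(?L + t *\<^sub>R mat 1) *v c = 0"
      then have "?L *v c + t *\<^sub>R c = 0"
        by (simp add: algebra_simps flip: scaleR_matrix_vector_assoc)
      then have "c \<bullet> (?L *v c) + t * (c \<bullet> c) = 0"
        by (metis inner_add_right inner_scaleR_right inner_zero_right)
      with gram_psd[of c p] assms have "c \<bullet> c = 0"
        by (smt (verit) inner_ge_zero mult_pos_pos zero_less_mult_iff)
      then show "c = 0" by simp
    qed
  qed
  then show ?thesis
    using matrix_left_invertible_injective invertible_left_inverse by blast
qed



theorem proposition2:
  fixes \<phi> :: "'x \<Rightarrow> 'f::{real_inner, complete_space}"
    and \<psi> :: "real \<times> 'z \<Rightarrow> 'u::{real_inner, complete_space}"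
    and k :: "'x \<Rightarrow> 'x \<Rightarrow> real"
    and l :: "real \<times> 'z \<Rightarrow> real \<times> 'z \<Rightarrow> real"
    and x :: "'n::finite \<Rightarrow> 'x" and y :: "'n \<Rightarrow> real" and z :: "'n \<Rightarrow> 'z"
    and lam\<^sub>1 lam\<^sub>2 :: real
  assumes k_def: "\<And>a b. k a b = inner (\<phi> a) (\<phi> b)"
    and l_def: "\<And>a b. l a b = inner (\<psi> a) (\<psi> b)"
    and pos1: "lam\<^sub>1 > 0" and pos2: "lam\<^sub>2 > 0"
    and invM: "let n = real CARD('n); K = gram k x; L = gram l (\<lambda>i. (y i, z i));
              M = K ** matrix_inv (L + (n * lam\<^sub>1) *\<^sub>R mat 1) ** L
              in invertible (M ** K + (n * lam\<^sub>2) *\<^sub>R K)"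
  shows "let n = real CARD('n); w = (\<lambda>i. (y i, z i));
             C_XW = emp_cov (\<lambda>i. \<phi> (x i)) (\<lambda>i. \<psi> (w i));
             C_WX = emp_cov (\<lambda>i. \<psi> (w i)) (\<lambda>i. \<phi> (x i));
             C_W = emp_cov (\<lambda>i. \<psi> (w i)) (\<lambda>i. \<psi> (w i));
             b = (1 / n) *\<^sub>R (\<Sum>i\<in>UNIV. y i *\<^sub>R \<psi> (w i));
             R = inv (\<lambda>u. C_W u + lam\<^sub>1 *\<^sub>R id u);
             fhat = inv (\<lambda>f. C_XW (R (C_WX f)) + lam\<^sub>2 *\<^sub>R id f) (C_XW (R b));
             K = gram k x; L = gram l w;
             M = K ** matrix_inv (L + (n * lam\<^sub>1) *\<^sub>R mat 1) ** L;
             \<beta> = matrix_inv (M ** K + (n * lam\<^sub>2) *\<^sub>R K) *v (M *v (\<chi> i. y i))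
         in fhat = (\<Sum>i\<in>UNIV. (\<beta> $ i) *\<^sub>R \<phi> (x i))"
  proof -
  define n where "n = real CARD('n)"
  define w where "w = (\<lambda>i. (y i, z i))"
  define \<Phi> where "\<Phi> = (\<lambda>i. \<phi> (x i))"
  define \<Psi> where "\<Psi> = (\<lambda>i. \<psi> (w i))"
  define K where "K = gram k x"
  define L where "L = gram l w"
  define A where "A = L + (n * lam\<^sub>1) *\<^sub>R mat 1"
  define Ai where "Ai = matrix_inv A"
  define M where "M = K ** Ai ** L"
  define C_XW where "C_XW = emp_cov \<Phi> \<Psi>"
  define C_WX where "C_WX = emp_cov \<Psi> \<Phi>"
  define G where "G = (\<lambda>u. emp_cov \<Psi> \<Psi> u + lam\<^sub>1 *\<^sub>R id u)"
  define R where "R = inv G"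
  define b where "b = (1 / n) *\<^sub>R (\<Sum>i\<in>UNIV. y i *\<^sub>R \<Psi> i)"
  define F where "F = (\<lambda>f. C_XW (R (C_WX f)) + lam\<^sub>2 *\<^sub>R id f)"
  define yv where "yv = (\<chi> i. y i)"
  define B where "B = M ** K + (n * lam\<^sub>2) *\<^sub>R K"
  define \<beta> where "\<beta> = matrix_inv B *v (M *v yv)"
  have npos: "n > 0" unfolding n_def by simp
  have Kg: "K = (\<chi> i j. inner (\<Phi> i) (\<Phi> j))" by (simp add: K_def gram_def k_def \<Phi>_def)
  have Lg: "L = (\<chi> i j. inner (\<Psi> i) (\<Psi> j))" by (simp add: L_def gram_def l_def \<Psi>_def)
  have Ainv: "invertible A" unfolding A_def Lg
    by (rule gram_inv) (use npos pos1 in simp)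
  have AAi: "A *v (Ai *v v) = v" for v
    using minv(1)[OF Ainv] by (simp add: Ai_def matrix_vector_mul_assoc)
  have AiA: "Ai *v (A *v v) = v" for v
    using minv(2)[OF Ainv] by (simp add: Ai_def matrix_vector_mul_assoc)
  have Av: "A *v v = L *v v + (n * lam\<^sub>1) *\<^sub>R v" for v
    by (simp add: A_def algebra_simps flip: scaleR_matrix_vector_assoc)
  have comm: "L *v (Ai *v v) = Ai *v (L *v v)" for v
  proof -
    have "A *v (L *v (Ai *v v)) = L *v (A *v (Ai *v v))"
      by (simp add: Av algebra_simps)
    then have "A *v (L *v (Ai *v v)) = L *v v" by (simp add: AAi)
    then show ?thesis by (metis AiA)
  qed
  have invB: "invertible B"
    using invM by (simp add: Let_def B_def M_def Ai_def A_def K_def L_def w_def n_def)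
  have Bv: "B *v \<beta> = M *v yv"
    by (metis \<beta>_def matrix_vector_mul_assoc minv(1)[OF invB] matrix_vector_mul_lid)
  have G_sum: "G (\<Sum>i\<in>UNIV. c$i *\<^sub>R \<Psi> i) = (1/n) *\<^sub>R (\<Sum>i\<in>UNIV. (A *v c)$i *\<^sub>R \<Psi> i)" for c
  proof -
    have "G (\<Sum>i\<in>UNIV. c$i *\<^sub>R \<Psi> i) = (\<Sum>i\<in>UNIV. ((1/n) * (L *v c)$i + lam\<^sub>1 * c$i) *\<^sub>R \<Psi> i)"
      unfolding G_def emp_cov_eq inner_sum_gram Lg[symmetric] n_def[symmetric]
      by (simp add: scaleR_add_left sum.distrib scaleR_sum_right)
    also have "\<dots> = (1/n) *\<^sub>R (\<Sum>i\<in>UNIV. (A *v c)$i *\<^sub>R \<Psi> i)"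
      unfolding scaleR_sum_right using npos
      by (intro sum.cong refl) (simp add: Av add_divide_distrib scaleR_add_left scaleR_add_right)
    finally show ?thesis .
  qed
  have linG: "linear G"
    unfolding G_def emp_cov_eq
    by (rule linearI) (simp_all add: inner_add_right algebra_simps sum.distrib scaleR_sum_right)
  have injG: "inj G"
  proof (rule linear_injective_0[OF linG, THEN iffD2], safe)
    fix u assume "G u = 0"
    then have "inner u (G u) = 0" by simp
    moreover have "inner u (G u) = (\<Sum>i\<in>UNIV. (1/n) * (inner (\<Psi> i) u)^2) + lam\<^sub>1 * inner u u"
      unfolding G_def emp_cov_eq n_def[symmetric]
      by (simp add: inner_add_right inner_sum_right power2_eq_square inner_commute mult_ac)
    moreover have "(\<Sum>i\<in>UNIV. (1/n) * (inner (\<Psi> i) u)^2) \<ge> 0"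
      using npos by (intro sum_nonneg) simp
    ultimately have "lam\<^sub>1 * inner u u \<le> 0" by linarith
    then have "inner u u \<le> 0" using pos1 by (simp add: mult_le_0_iff)
    then show "u = 0" by (metis inner_eq_zero_iff inner_ge_zero order_antisym)
  qed
  have R_sum: "R (\<Sum>i\<in>UNIV. a$i *\<^sub>R \<Psi> i) = (\<Sum>i\<in>UNIV. (Ai *v (n *\<^sub>R a))$i *\<^sub>R \<Psi> i)" for a
  proof -
    have "G (\<Sum>i\<in>UNIV. (Ai *v (n *\<^sub>R a))$i *\<^sub>R \<Psi> i) = (\<Sum>i\<in>UNIV. a$i *\<^sub>R \<Psi> i)"
      unfolding G_sum AAi using npos by (simp add: scaleR_sum_right)
    then show ?thesis unfolding R_def by (metis inv_f_f[OF injG])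
  qed
  define kf where "kf = (\<lambda>f. \<chi> i. inner (\<Phi> i) f)"
  define E where "E = (\<lambda>f. (\<Sum>i\<in>UNIV. ((1/n) * (L *v (Ai *v kf f))$i) *\<^sub>R \<Phi> i) + lam\<^sub>2 *\<^sub>R f)"
  have CXW_sum: "C_XW (\<Sum>i\<in>UNIV. c$i *\<^sub>R \<Psi> i) = (\<Sum>i\<in>UNIV. ((1/n) * (L *v c)$i) *\<^sub>R \<Phi> i)" for c
    unfolding C_XW_def emp_cov_eq inner_sum_gram Lg[symmetric] n_def[symmetric] ..
  have FE: "F = E"
  proof
    fix f
    have e1: "C_WX f = (\<Sum>i\<in>UNIV. (\<chi> i. (1/n) * inner (\<Phi> i) f)$i *\<^sub>R \<Psi> i)"
      unfolding C_WX_def emp_cov_eq n_def[symmetric] by simp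
    have e2: "n *\<^sub>R (\<chi> i. (1/n) * inner (\<Phi> i) f) = kf f"
      using npos by (simp add: kf_def vec_eq_iff)
    have "R (C_WX f) = (\<Sum>i\<in>UNIV. (Ai *v kf f)$i *\<^sub>R \<Psi> i)"
      unfolding e1 R_sum e2 ..
    then show "F f = E f" unfolding F_def E_def by (simp add: CXW_sum)
  qed
  have linE: "linear E"
  proof -
    have kfa: "kf (f + g) = kf f + kf g" for f g by (simp add: kf_def vec_eq_iff inner_add_right)
    have kfs: "kf (r *\<^sub>R f) = r *\<^sub>R kf f" for r f by (simp add: kf_def vec_eq_iff)
    show ?thesis unfolding E_def
      by (rule linearI) (simp_all add: kfa kfs matrix_vector_right_distrib matrix_vector_mult_scaleR
          algebra_simps sum.distrib scaleR_sum_right)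
  qed
  have injE: "inj E"
  proof (rule linear_injective_0[OF linE, THEN iffD2], safe)
    fix f assume "E f = 0"
    then have "inner f (E f) = 0" by simp
    define c where "c = Ai *v kf f"
    have kfc: "kf f = L *v c + (n * lam\<^sub>1) *\<^sub>R c" unfolding c_def Av[symmetric] AAi ..
    have "inner f (E f) = (1/n) * (kf f \<bullet> (L *v c)) + lam\<^sub>2 * inner f f"
      unfolding E_def c_def
      by (simp add: inner_add_right inner_sum_right inner_vec_def kf_def sum_distrib_left inner_commute mult_ac)
    moreover have "kf f \<bullet> (L *v c) \<ge> 0"
    proof -
      have "kf f \<bullet> (L *v c) = (L *v c) \<bullet> (L *v c) + (n * lam\<^sub>1) * (c \<bullet> (L *v c))"
        unfolding kfc by (simp add: inner_add_left)
      moreover have "c \<bullet> (L *v c) \<ge> 0" unfolding Lg by (rule gram_psd)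
      ultimately show ?thesis using npos pos1 by simp
    qed
    ultimately have "lam\<^sub>2 * inner f f \<le> 0" using npos \<open>inner f (E f) = 0\<close>
      by (smt (verit) divide_nonneg_pos mult_nonneg_nonneg zero_le_divide_1_iff)
    then have "inner f f \<le> 0" using pos2 by (simp add: mult_le_0_iff)
    then show "f = 0" by (metis inner_eq_zero_iff inner_ge_zero order_antisym)
  qed
  define f0 where "f0 = (\<Sum>i\<in>UNIV. (\<beta> $ i) *\<^sub>R \<Phi> i)"
  have Rb: "R b = (\<Sum>i\<in>UNIV. (Ai *v yv)$i *\<^sub>R \<Psi> i)"
  proof -
    have e1: "b = (\<Sum>i\<in>UNIV. (\<chi> i. y i / n)$i *\<^sub>R \<Psi> i)"
      unfolding b_def by (simp add: scaleR_sum_right)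
    have e2: "n *\<^sub>R (\<chi> i. y i / n) = yv" using npos by (simp add: yv_def vec_eq_iff)
    show ?thesis unfolding e1 R_sum e2 ..
  qed
  have T: "C_XW (R b) = (\<Sum>i\<in>UNIV. ((1/n) * (L *v (Ai *v yv))$i) *\<^sub>R \<Phi> i)"
    unfolding Rb CXW_sum ..
  have kf0: "kf f0 = K *v \<beta>"
    unfolding kf_def f0_def Kg by (simp add: vec_eq_iff inner_sum_gram[symmetric])
  define d where "d = L *v (Ai *v (K *v \<beta>)) + (n * lam\<^sub>2) *\<^sub>R \<beta> - L *v (Ai *v yv)"
  have Kd: "K *v d = 0"
  proof -
    have m1: "K *v (Ai *v (L *v (K *v \<beta>))) = (M ** K) *v \<beta>"
      by (metis M_def matrix_vector_mul_assoc)
    have m2: "K *v (Ai *v (L *v yv)) = M *v yv"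
      by (metis M_def matrix_vector_mul_assoc)
    have "K *v d = (M ** K) *v \<beta> + (n * lam\<^sub>2) *\<^sub>R (K *v \<beta>) - M *v yv"
      unfolding d_def comm m1[symmetric] m2[symmetric]
      by (simp add: matrix_vector_right_distrib matrix_vector_mult_diff_distrib matrix_vector_mult_scaleR)
    also have "\<dots> = B *v \<beta> - M *v yv"
      by (simp add: B_def algebra_simps flip: scaleR_matrix_vector_assoc)
    finally show ?thesis using Bv by simp
  qed
  have dsum: "(\<Sum>i\<in>UNIV. d$i *\<^sub>R \<Phi> i) = 0"
    using Kd unfolding Kg by (rule gram_kernel)
  have dco: "(1/n) * (L *v (Ai *v (K *v \<beta>)))$i + lam\<^sub>2 * \<beta>$i
      = (1/n) * (L *v (Ai *v yv))$i + (1/n) * d$i" for i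
    using npos by (simp add: d_def field_simps)
  have "E f0 = (\<Sum>i\<in>UNIV. ((1/n) * (L *v (Ai *v (K *v \<beta>)))$i + lam\<^sub>2 * \<beta>$i) *\<^sub>R \<Phi> i)"
    by (simp only: E_def kf0) (simp only: f0_def scaleR_add_left sum.distrib scaleR_sum_right scaleR_scaleR)
  also have "\<dots> = (\<Sum>i\<in>UNIV. ((1/n) * (L *v (Ai *v yv))$i + (1/n) * d$i) *\<^sub>R \<Phi> i)"
    unfolding dco ..
  also have "\<dots> = C_XW (R b) + (1/n) *\<^sub>R (\<Sum>i\<in>UNIV. d$i *\<^sub>R \<Phi> i)"
    unfolding T by (simp only: scaleR_add_left sum.distrib scaleR_sum_right scaleR_scaleR)
  finally have "E f0 = C_XW (R b) + (1/n) *\<^sub>R (\<Sum>i\<in>UNIV. d$i *\<^sub>R \<Phi> i)" .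
  then have Ef0: "E f0 = C_XW (R b)" using dsum by simp
  have main: "inv F (C_XW (R b)) = f0"
    unfolding FE Ef0[symmetric] by (rule inv_f_f[OF injE])
  show ?thesis
    using main
    by (simp add: Let_def n_def w_def \<Phi>_def \<Psi>_def K_def L_def A_def Ai_def M_def C_XW_def C_WX_def G_def R_def b_def F_def yv_def B_def \<beta>_def f0_def)
qed

end
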